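(* Let $M$ be a compact Polish metric space, let $\bar a=(a_0,\dots,a_{p-1})$ and $\bar b=(b_0,\dots,b_{p-1})$ be tuples from $M$, and let $(A_n:n\in\omega)$ be a sequence of finite subsets of $M$ with $A_n\subseteq A_{n+1}$ and $\bigcup_{z\in A_n}B_{2^{-n}}(z)=M$ for all $n$. If $\mathrm{SR}(\bar a,\bar b)>\omega$, then there is a compact approximation system for $M,\bar a,\bar b$ with respect to $(A_n:n\in\omega)$.
   Context: $B_r(z)$ denotes the open ball of radius $r$ about $z$. $M$ is viewed as a structure in the language $\mathscr{U}=\{\dot d_q,\dot d^q:q\in\mathbb{Q}^+\}$ with $\dot d_q(x,y)\Leftrightarrow d(x,y)<q$ and $\dot d^q(x,y)\Leftrightarrow d(x,y)>q$. Back-and-forth relations on equal-length tuples: $\bar a\sim_0\bar b$ iff $a_i\mapsto b_i$ is a partial $\mathscr{U}$-isomorphism (i.e. a partial isometry); $\bar a\sim_{\alpha+1}\bar b$ iff for every $a\in M$ there is $b\in M$ with $\bar a a\sim_\alpha\bar b b$ and for every $b\in M$ there is $a\in M$ with $\bar a a\sim_\alpha\bar b b$; at limits $\beta$, $\sim_\beta$ is the intersection of $\sim_\alpha$, $\alpha<\beta$. $\mathrm{SR}(\bar a,\bar b)$ is the least $\mu$ with $\neg(\bar a\sim_\mu\bar b)$ (or $\infty$). A compact approximation system for $M,\bar a,\bar b$ with respect to $(A_n)$ is a sequence $(\varphi_n:n\in\omega)$ such that for every $n$: (i) $\varphi_n:A_n\to A_n$; (ii) for all $i<p$ and $z\in A_n$,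 $|d(a_i,z)-d(b_i,\varphi_n(z))|<2^{-n}$; (iii) for all $m\le n$, $y\in A_m$, $z\in A_n$, $|d(y,z)-d(\varphi_m(y),\varphi_n(z))|<2^{-m}+2^{-n}$; (iv) $\bigcup_{z\in A_n}B_{2^{-(n-1)}}(\varphi_n(z))=M$. *)

theory Defs
  imports "HOL-Analysis.Analysis"
begin

text \<open>Tuples are lists. The map a_i to b_i is a partial isomorphism for the language
  with relations d_q (distance < q) and d^q (distance > q), q positive rational.\<close>
definition partial_iso :: "'a::metric_space list \<Rightarrow> 'a list \<Rightarrow> bool" where
  "partial_iso as bs \<longleftrightarrow> length as = length bs \<and>
     (\<forall>i<length as. \<forall>j<length as. \<forall>q\<in>\<rat>. q > 0 \<longrightarrow>
        (dist (as!i) (as!j) < q \<longleftrightarrow> dist (bs!i) (bs!j) < q) \<and>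
        (dist (as!i) (as!j) > q \<longleftrightarrow> dist (bs!i) (bs!j) > q))"

fun bf_sim :: "'a::metric_space set \<Rightarrow> nat \<Rightarrow> 'a list \<Rightarrow> 'a list \<Rightarrow> bool" where
  "bf_sim M 0 as bs = partial_iso as bs"
| "bf_sim M (Suc n) as bs =
     ((\<forall>x\<in>M. \<exists>y\<in>M. bf_sim M n (as @ [x]) (bs @ [y])) \<and>
      (\<forall>y\<in>M. \<exists>x\<in>M. bf_sim M n (as @ [x]) (bs @ [y])))"

text \<open>SR(as,bs) > omega  iff  as ~_mu bs for all mu \<le> omega  iff  as ~_omega bs
  iff  as ~_n bs for every finite n (since ~_omega is the intersection of the ~_n).\<close>
definition SR_gt_omega :: "'a::metric_space set \<Rightarrow> 'a list \<Rightarrow> 'a list \<Rightarrow> bool" where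
  "SR_gt_omega M as bs \<longleftrightarrow> (\<forall>n. bf_sim M n as bs)"

definition compact_approx_system ::
  "'a::metric_space set \<Rightarrow> 'a list \<Rightarrow> 'a list \<Rightarrow> (nat \<Rightarrow> 'a set) \<Rightarrow> (nat \<Rightarrow> 'a \<Rightarrow> 'a) \<Rightarrow> bool" where
  "compact_approx_system M as bs A \<phi> \<longleftrightarrow>
     (\<forall>n.
       (\<forall>z\<in>A n. \<phi> n z \<in> A n) \<and>
       (\<forall>i<length as. \<forall>z\<in>A n. \<bar>dist (as!i) z - dist (bs!i) (\<phi> n z)\<bar> < 1 / 2^n) \<and>
       (\<forall>m\<le>n. \<forall>y\<in>A m. \<forall>z\<in>A n.
          \<bar>dist y z - dist (\<phi> m y) (\<phi> n z)\<bar> < 1 / 2^m + 1 / 2^n) \<and>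
       M \<inter> (\<Union>z\<in>A n. ball (\<phi> n z) (2 / 2^n)) = M)"

end

theory Submission
  imports Defs
begin

lemma partial_iso_iff:
  "partial_iso xs ys \<longleftrightarrow> length xs = length ys \<and>
     (\<forall>i<length xs. \<forall>j<length xs. dist (xs!i) (xs!j) = dist (ys!i) (ys!j))"
proof
  assume H: "partial_iso xs ys"
  have "dist (xs!i) (xs!j) = dist (ys!i) (ys!j)" if "i < length xs" "j < length xs" for i j
  proof (rule ccontr)
    let ?d1 = "dist (xs!i) (xs!j)" and ?d2 = "dist (ys!i) (ys!j)"
    assume ne: "?d1 \<noteq> ?d2"
    have P: "\<And>q. q \<in> \<rat> \<Longrightarrow> q > 0 \<Longrightarrow> (?d1 < q \<longleftrightarrow> ?d2 < q)"
      using H that unfolding partial_iso_def by blast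
    show False
    proof (cases "?d1 < ?d2")
      case True
      then obtain q where q: "q \<in> \<rat>" "?d1 < q" "q < ?d2" using Rats_dense_in_real by blast
      have "q > 0" using q(2) zero_le_dist[of "xs!i" "xs!j"] by linarith
      then show False using P[OF q(1)] q by auto
    next
      case False
      then have "?d2 < ?d1" using ne by auto
      then obtain q where q: "q \<in> \<rat>" "?d2 < q" "q < ?d1" using Rats_dense_in_real by blast
      have "q > 0" using q(2) zero_le_dist[of "ys!i" "ys!j"] by linarith
      then show False using P[OF q(1)] q by auto
    qed
  qed
  then show "length xs = length ys \<and>
     (\<forall>i<length xs. \<forall>j<length xs. dist (xs!i) (xs!j) = dist (ys!i) (ys!j))"
    using H unfolding partial_iso_def by blast
next
  assume "length xs = length ys \<and>
     (\<forall>i<length xs. \<forall>j<length xs. dist (xs!i) (xs!j) = dist (ys!i) (ys!j))"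
  then show "partial_iso xs ys" unfolding partial_iso_def by auto
qed

definition lconv :: "(nat \<Rightarrow> 'a::metric_space list) \<Rightarrow> 'a list \<Rightarrow> bool" where
  "lconv xs x \<longleftrightarrow> (\<forall>j. length (xs j) = length x) \<and> (\<forall>i<length x. (\<lambda>j. xs j ! i) \<longlonglongrightarrow> x ! i)"

lemma lconv_sub: "lconv xs x \<Longrightarrow> strict_mono r \<Longrightarrow> lconv (\<lambda>j. xs (r j)) x"
  unfolding lconv_def using LIMSEQ_subseq_LIMSEQ[unfolded comp_def] by blast

lemma lconv_app: "lconv xs x \<Longrightarrow> v \<longlonglongrightarrow> v0 \<Longrightarrow> lconv (\<lambda>j. xs j @ [v j]) (x @ [v0])"
  unfolding lconv_def
proof (intro conjI allI impI)
  fix i assume H: "(\<forall>j. length (xs j) = length x) \<and> (\<forall>i<length x. (\<lambda>j. xs j ! i) \<longlonglongrightarrow> x ! i)"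
    "v \<longlonglongrightarrow> v0" and i: "i < length (x @ [v0])"
  show "(\<lambda>j. (xs j @ [v j]) ! i) \<longlonglongrightarrow> (x @ [v0]) ! i"
  proof (cases "i < length x")
    case True then show ?thesis using H by (simp add: nth_append del: upt_Suc)
  next
    case False then have "i = length x" using i by simp
    then show ?thesis using H by (simp add: nth_append del: upt_Suc)
  qed
qed (auto)

lemma lconv_const: "lconv (\<lambda>j. x) x"
  unfolding lconv_def by auto

lemma bf_closed:
  assumes "compact M" "lconv xs x" "lconv ys y" "\<forall>j. bf_sim M k (xs j) (ys j)"
  shows "bf_sim M k x y"
  using assms
proof (induction k arbitrary: xs ys x y)
  case 0
  have pi: "partial_iso (xs j) (ys j)" for j using 0 by simp
  have len: "length x = length y"
    using pi[of 0] 0(2,3) unfolding partial_iso_iff lconv_def by metis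
  have "dist (x!i) (x!i') = dist (y!i) (y!i')" if "i < length x" "i' < length x" for i i'
  proof -
    have t1: "(\<lambda>j. dist (xs j!i) (xs j!i')) \<longlonglongrightarrow> dist (x!i) (x!i')"
      using 0(2) that unfolding lconv_def by (intro tendsto_dist) auto
    have t2: "(\<lambda>j. dist (ys j!i) (ys j!i')) \<longlonglongrightarrow> dist (y!i) (y!i')"
      using 0(3) that len unfolding lconv_def by (intro tendsto_dist) auto
    have "(\<lambda>j. dist (xs j!i) (xs j!i')) = (\<lambda>j. dist (ys j!i) (ys j!i'))"
      using pi 0(2) that unfolding partial_iso_iff lconv_def by auto
    then show ?thesis using t1 t2 LIMSEQ_unique by metis
  qed
  then show ?case using len by (simp add: partial_iso_iff)
next
  case (Suc k)
  have sc: "seq_compact M" using Suc.prems(1) compact_imp_seq_compact by blast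
  have forth: "\<exists>w\<in>M. bf_sim M k (x @ [u]) (y @ [w])" if u: "u \<in> M" for u
  proof -
    have "\<forall>j. \<exists>w\<in>M. bf_sim M k (xs j @ [u]) (ys j @ [w])" using Suc.prems(4) u by simp
    then obtain v where v: "\<And>j. v j \<in> M \<and> bf_sim M k (xs j @ [u]) (ys j @ [v j])" by metis
    then obtain l r where lr: "l \<in> M" "strict_mono r" "(v \<circ> r) \<longlonglongrightarrow> l"
      using seq_compactE[OF sc, of v] by blast
    have "bf_sim M k (x @ [u]) (y @ [l])"
    proof (rule Suc.IH[where xs="\<lambda>j. xs (r j) @ [u]" and ys="\<lambda>j. ys (r j) @ [v (r j)]"])
      show "compact M" by (rule Suc.prems(1))
      show "lconv (\<lambda>j. xs (r j) @ [u]) (x @ [u])"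
        using lconv_app[OF lconv_sub[OF Suc.prems(2) lr(2)], of "\<lambda>j. u" u] by simp
      show "lconv (\<lambda>j. ys (r j) @ [v (r j)]) (y @ [l])"
        using lconv_app[OF lconv_sub[OF Suc.prems(3) lr(2)], of "\<lambda>j. v (r j)" l] lr(3)
        by (simp add: comp_def)
      show "\<forall>j. bf_sim M k (xs (r j) @ [u]) (ys (r j) @ [v (r j)])" using v by blast
    qed
    then show ?thesis using lr(1) by blast
  qed
  have bck: "\<exists>w\<in>M. bf_sim M k (x @ [w]) (y @ [u])" if u: "u \<in> M" for u
  proof -
    have "\<forall>j. \<exists>w\<in>M. bf_sim M k (xs j @ [w]) (ys j @ [u])" using Suc.prems(4) u by simp
    then obtain v where v: "\<And>j. v j \<in> M \<and> bf_sim M k (xs j @ [v j]) (ys j @ [u])" by metis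
    then obtain l r where lr: "l \<in> M" "strict_mono r" "(v \<circ> r) \<longlonglongrightarrow> l"
      using seq_compactE[OF sc, of v] by blast
    have "bf_sim M k (x @ [l]) (y @ [u])"
    proof (rule Suc.IH[where xs="\<lambda>j. xs (r j) @ [v (r j)]" and ys="\<lambda>j. ys (r j) @ [u]"])
      show "compact M" by (rule Suc.prems(1))
      show "lconv (\<lambda>j. ys (r j) @ [u]) (y @ [u])"
        using lconv_app[OF lconv_sub[OF Suc.prems(3) lr(2)], of "\<lambda>j. u" u] by simp
      show "lconv (\<lambda>j. xs (r j) @ [v (r j)]) (x @ [l])"
        using lconv_app[OF lconv_sub[OF Suc.prems(2) lr(2)], of "\<lambda>j. v (r j)" l] lr(3)
        by (simp add: comp_def)
      show "\<forall>j. bf_sim M k (xs (r j) @ [v (r j)]) (ys (r j) @ [u])" using v by blast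
    qed
    then show ?thesis using lr(1) by blast
  qed
  show ?case using forth bck by simp
qed

lemma partial_iso_prefix:
  assumes "partial_iso (xs @ [u]) (ys @ [w])" shows "partial_iso xs ys"
proof -
  have L: "length xs = length ys" using assms unfolding partial_iso_iff by simp
  have "dist (xs!i) (xs!j) = dist (ys!i) (ys!j)" if "i < length xs" "j < length xs" for i j
  proof -
    have "dist ((xs @ [u])!i) ((xs @ [u])!j) = dist ((ys @ [w])!i) ((ys @ [w])!j)"
      using assms that unfolding partial_iso_iff by simp
    then show ?thesis using that L by (simp add: nth_append del: upt_Suc)
  qed
  then show ?thesis using L unfolding partial_iso_iff by blast
qed

lemma bf_mono_Suc: "M \<noteq> {} \<Longrightarrow> bf_sim M (Suc k) xs ys \<Longrightarrow> bf_sim M k xs ys"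
proof (induction k arbitrary: xs ys)
  case 0
  then obtain u where u: "u \<in> M" by blast
  then obtain w where "partial_iso (xs @ [u]) (ys @ [w])"
    using 0(2) bf_sim.simps(2)[of M 0 xs ys] bf_sim.simps(1) by blast
  then show ?case using partial_iso_prefix bf_sim.simps(1) by blast
next
  case (Suc k)
  have A: "\<forall>x\<in>M. \<exists>y\<in>M. bf_sim M (Suc k) (xs @ [x]) (ys @ [y])"
    and B: "\<forall>y\<in>M. \<exists>x\<in>M. bf_sim M (Suc k) (xs @ [x]) (ys @ [y])"
    using Suc.prems(2) bf_sim.simps(2)[of M "Suc k" xs ys] by blast+
  show ?case
  proof (subst bf_sim.simps(2), intro conjI ballI)
    fix x assume "x \<in> M"
    then obtain y where "y \<in> M" "bf_sim M (Suc k) (xs @ [x]) (ys @ [y])" using A by blast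
    then show "\<exists>y\<in>M. bf_sim M k (xs @ [x]) (ys @ [y])" using Suc.IH Suc.prems(1) by blast
  next
    fix y assume "y \<in> M"
    then obtain x where "x \<in> M" "bf_sim M (Suc k) (xs @ [x]) (ys @ [y])" using B by blast
    then show "\<exists>x\<in>M. bf_sim M k (xs @ [x]) (ys @ [y])" using Suc.IH Suc.prems(1) by blast
  qed
qed

lemma bf_mono_add: "M \<noteq> {} \<Longrightarrow> bf_sim M (k + d) xs ys \<Longrightarrow> bf_sim M k xs ys"
proof (induction d)
  case 0 then show ?case by simp
next
  case (Suc d)
  have "bf_sim M (Suc (k + d)) xs ys" using Suc.prems(2) by simp
  then have "bf_sim M (k + d) xs ys" using bf_mono_Suc Suc.prems(1) by blast
  then show ?case using Suc.IH Suc.prems(1) by blast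
qed

lemma bf_mono: "M \<noteq> {} \<Longrightarrow> k \<le> k' \<Longrightarrow> bf_sim M k' xs ys \<Longrightarrow> bf_sim M k xs ys"
  using bf_mono_add[of M k "k' - k" xs ys] by simp

lemma E_forth:
  assumes "compact M" "M \<noteq> {}" "\<forall>k. bf_sim M k as bs" "x \<in> M"
  shows "\<exists>y\<in>M. \<forall>k. bf_sim M k (as @ [x]) (bs @ [y])"
proof -
  have "\<forall>k. \<exists>y\<in>M. bf_sim M k (as @ [x]) (bs @ [y])"
  proof
    fix k have "bf_sim M (Suc k) as bs" using assms(3) by blast
    then show "\<exists>y\<in>M. bf_sim M k (as @ [x]) (bs @ [y])" using assms(4) by simp
  qed
  then obtain v where v: "\<And>k. v k \<in> M \<and> bf_sim M k (as @ [x]) (bs @ [v k])" by metis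
  have sc: "seq_compact M" using assms(1) compact_imp_seq_compact by blast
  obtain l r where lr: "l \<in> M" "strict_mono r" "(v \<circ> r) \<longlonglongrightarrow> l"
    using seq_compactE[OF sc, of v] v by blast
  have "bf_sim M k (as @ [x]) (bs @ [l])" for k
  proof (rule bf_closed[where xs="\<lambda>j. as @ [x]" and ys="\<lambda>j. bs @ [v (r (j + k))]"])
    show "compact M" by (rule assms(1))
    show "lconv (\<lambda>j. as @ [x]) (as @ [x])" by (rule lconv_const)
    have "(\<lambda>j. v (r (j + k))) \<longlonglongrightarrow> l"
      using LIMSEQ_ignore_initial_segment[OF lr(3), of k] by (simp add: comp_def)
    then show "lconv (\<lambda>j. bs @ [v (r (j + k))]) (bs @ [l])"
      using lconv_app[OF lconv_const[of bs]] by blast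
    show "\<forall>j. bf_sim M k (as @ [x]) (bs @ [v (r (j + k))])"
    proof
      fix j
      have "k \<le> r (j + k)" using seq_suble[OF lr(2), of "j+k"] by simp
      then show "bf_sim M k (as @ [x]) (bs @ [v (r (j + k))])"
        using bf_mono[OF assms(2)] v by blast
    qed
  qed
  then show ?thesis using lr(1) by blast
qed

lemma finite_range_prefix:
  fixes c :: "nat \<Rightarrow> 'a"
  assumes "finite S" "S \<subseteq> range c" shows "\<exists>N. S \<subseteq> c ` {..<N}"
  using assms
proof (induction S rule: finite_induct)
  case empty then show ?case by simp
next
  case (insert x S)
  then obtain N where N: "S \<subseteq> c ` {..<N}" by blast
  obtain i where i: "x = c i" using insert.prems by blast
  have "c ` {..<N} \<subseteq> c ` {..<max N (Suc i)}" by (intro image_mono) auto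
  moreover have "x \<in> c ` {..<max N (Suc i)}" unfolding i by (rule imageI) auto
  ultimately have "insert x S \<subseteq> c ` {..<max N (Suc i)}" using N by blast
  then show ?case by blast
qed

lemma abs_dist_diff1: "\<bar>dist x y - dist x z\<bar> \<le> dist y z"
proof -
  have "dist x y \<le> dist x z + dist z y" by (rule dist_triangle)
  moreover have "dist x z \<le> dist x y + dist y z" by (rule dist_triangle)
  ultimately show ?thesis by (simp add: dist_commute abs_le_iff)
qed

lemma abs_dist_diff2: "\<bar>dist a b - dist c d\<bar> \<le> dist a c + dist b d"
proof -
  have "\<bar>dist a b - dist c b\<bar> \<le> dist a c" using abs_dist_diff1[of b a c] by (simp add: dist_commute)
  moreover have "\<bar>dist c b - dist c d\<bar> \<le> dist b d" by (rule abs_dist_diff1)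
  ultimately show ?thesis by linarith
qed

theorem lemma3p3:
  fixes M :: "'a::metric_space set" and as bs :: "'a list" and A :: "nat \<Rightarrow> 'a set"
  assumes "compact M"
    and "length as = p" and "length bs = p"
    and "set as \<subseteq> M" and "set bs \<subseteq> M"
    and "\<And>n. finite (A n)" and "\<And>n. A n \<subseteq> M"
    and "\<And>n. A n \<subseteq> A (Suc n)"
    and "\<And>n. M \<inter> (\<Union>z\<in>A n. ball z (1 / 2^n)) = M"
    and "SR_gt_omega M as bs"
  shows "\<exists>\<phi>. compact_approx_system M as bs A \<phi>"
proof (cases "(\<Union>n. A n) = {}")
  case True
  then have A0: "A n = {}" for n by auto
  have "M = {}" using assms(9)[of 0] A0 by simp
  then show ?thesis unfolding compact_approx_system_def using A0 by simp
next
  case False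
  define U where "U = (\<Union>n. A n)"
  have Une: "U \<noteq> {}" using False U_def by simp
  have cU: "countable U" unfolding U_def using assms(6) by (simp add: countable_finite)
  define c where "c = from_nat_into U"
  have rc: "range c = U" unfolding c_def using Une cU by simp
  have UM: "U \<subseteq> M" unfolding U_def using assms(7) by blast
  have cM: "c k \<in> M" for k using rc UM by blast
  have Mne: "M \<noteq> {}" using cM by blast
  define E where "E xs ys \<longleftrightarrow> (\<forall>k. bf_sim M k xs ys)" for xs ys
  have Ef: "E xs ys \<Longrightarrow> x \<in> M \<Longrightarrow> \<exists>y\<in>M. E (xs @ [x]) (ys @ [y])" for xs ys x
    using E_forth[OF assms(1) Mne] unfolding E_def by blast
  define step where "step k q = q @ [SOME y. y \<in> M \<and> E (as @ map c [0..<Suc k]) (bs @ q @ [y])]" for k q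
  define Q where "Q = rec_nat [] step"
  have Q0: "Q 0 = []" unfolding Q_def by simp
  have QS: "Q (Suc k) = Q k @ [SOME y. y \<in> M \<and> E (as @ map c [0..<Suc k]) (bs @ Q k @ [y])]" for k
    unfolding Q_def by (simp add: step_def)
  have inv: "length (Q k) = k \<and> set (Q k) \<subseteq> M \<and> E (as @ map c [0..<k]) (bs @ Q k)" for k
  proof (induction k)
    case 0
    have "E as bs" using assms(10) unfolding E_def SR_gt_omega_def by blast
    then show ?case using Q0 by simp
  next
    case (Suc k)
    have "\<exists>y\<in>M. E ((as @ map c [0..<k]) @ [c k]) ((bs @ Q k) @ [y])"
      using Ef Suc.IH cM by blast
    then have ex: "\<exists>y. y \<in> M \<and> E (as @ map c [0..<Suc k]) (bs @ Q k @ [y])" by simp blast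
    define y0 where "y0 = (SOME y. y \<in> M \<and> E (as @ map c [0..<Suc k]) (bs @ Q k @ [y]))"
    have y0: "y0 \<in> M \<and> E (as @ map c [0..<Suc k]) (bs @ Q k @ [y0])"
      unfolding y0_def by (rule someI_ex[OF ex])
    have "Q (Suc k) = Q k @ [y0]" using QS y0_def by simp
    then show ?case using Suc.IH y0 by simp
  qed
  define g where "g i = Q (Suc i) ! i" for i
  have Qg: "i < k \<Longrightarrow> Q k ! i = g i" for i k
  proof (induction k)
    case 0 then show ?case by simp
  next
    case (Suc k)
    show ?case
    proof (cases "i < k")
      case True
      have "Q (Suc k) ! i = Q k ! i" using QS[of k] inv[of k] True by (simp add: nth_append del: upt_Suc)
      then show ?thesis using Suc.IH True by simp
    next
      case False
      then have "i = k" using Suc.prems by simp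
      then show ?thesis unfolding g_def by simp
    qed
  qed
  have Qmap: "Q k = map g [0..<k]" for k
    by (rule nth_equalityI) (use inv Qg in auto)
  have gM: "g i \<in> M" for i
  proof -
    have "g i \<in> set (Q (Suc i))" unfolding g_def using inv[of "Suc i"] by simp
    then show ?thesis using inv[of "Suc i"] by blast
  qed
  have Eiso: "E (as @ map c [0..<k]) (bs @ map g [0..<k])" for k
    using inv[of k] Qmap[of k] by simp
  have PI: "partial_iso (as @ map c [0..<k]) (bs @ map g [0..<k])" for k
    using Eiso[of k] unfolding E_def using bf_sim.simps(1) by blast
  have dcc: "dist (c i) (c j) = dist (g i) (g j)" for i j
  proof -
    let ?k = "Suc (i + j)"
    have "dist ((as @ map c [0..<?k]) ! (p+i)) ((as @ map c [0..<?k]) ! (p+j))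
        = dist ((bs @ map g [0..<?k]) ! (p+i)) ((bs @ map g [0..<?k]) ! (p+j))"
      using PI[of ?k] assms(2) unfolding partial_iso_iff by auto
    then show ?thesis using assms(2,3) by (simp add: nth_append del: upt_Suc)
  qed
  have dac: "l < p \<Longrightarrow> dist (as!l) (c i) = dist (bs!l) (g i)" for l i
  proof -
    assume l: "l < p"
    let ?k = "Suc i"
    have "dist ((as @ map c [0..<?k]) ! l) ((as @ map c [0..<?k]) ! (p+i))
        = dist ((bs @ map g [0..<?k]) ! l) ((bs @ map g [0..<?k]) ! (p+i))"
      using PI[of ?k] assms(2) l unfolding partial_iso_iff by auto
    then show ?thesis using assms(2,3) l by (simp add: nth_append del: upt_Suc)
  qed
  define h where "h z = g (SOME i. c i = z)" for z
  have hc: "c i = z \<Longrightarrow> g i = h z" for i z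
  proof -
    assume ci: "c i = z"
    have "c (SOME i. c i = z) = z" using ci by (rule someI)
    then have "dist (g i) (h z) = 0" unfolding h_def using dcc[of i "SOME i. c i = z"] ci by simp
    then show ?thesis by simp
  qed
  have hM: "h z \<in> M" if zU: "z \<in> U" for z
  proof -
    have "z \<in> range c" using zU rc by simp
    then obtain i where "c i = z" by blast
    then show ?thesis using hc gM by metis
  qed
  define \<phi> where "\<phi> n z = (SOME w. w \<in> A n \<and> dist (h z) w < 1/2^n)" for n z
  have phi: "\<phi> n z \<in> A n \<and> dist (h z) (\<phi> n z) < 1/2^n" if z: "z \<in> A n" for n z
  proof -
    have "h z \<in> M" using hM z U_def by blast
    then have "h z \<in> (\<Union>w\<in>A n. ball w (1 / 2^n))" using assms(9)[of n] by blast
    then have "\<exists>w. w \<in> A n \<and> dist (h z) w < 1/2^n" by (auto simp: dist_commute)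
    then show ?thesis unfolding \<phi>_def by (rule someI_ex)
  qed
  have hz: "z \<in> A n \<Longrightarrow> \<exists>i. c i = z \<and> g i = h z" for z n
  proof -
    assume "z \<in> A n"
    then have "z \<in> range c" using rc U_def by blast
    then obtain i where "c i = z" by blast
    then show ?thesis using hc by blast
  qed
  show ?thesis
  proof (rule exI[of _ \<phi>], unfold compact_approx_system_def, rule allI, intro conjI)
    fix n
    show "\<forall>z\<in>A n. \<phi> n z \<in> A n" using phi by blast
    show "\<forall>i<length as. \<forall>z\<in>A n. \<bar>dist (as!i) z - dist (bs!i) (\<phi> n z)\<bar> < 1 / 2^n"
    proof (intro allI impI ballI)
      fix i z assume i: "i < length as" and z: "z \<in> A n"
      obtain j where j: "c j = z" "g j = h z" using hz[OF z] by blast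
      have "dist (as!i) z = dist (bs!i) (h z)" using dac[of i j] i j assms(2) by simp
      moreover have "\<bar>dist (bs!i) (h z) - dist (bs!i) (\<phi> n z)\<bar> \<le> dist (h z) (\<phi> n z)"
        by (rule abs_dist_diff1)
      ultimately show "\<bar>dist (as!i) z - dist (bs!i) (\<phi> n z)\<bar> < 1 / 2^n" using phi[OF z] by simp
    qed
    show "\<forall>m\<le>n. \<forall>y\<in>A m. \<forall>z\<in>A n. \<bar>dist y z - dist (\<phi> m y) (\<phi> n z)\<bar> < 1 / 2^m + 1 / 2^n"
    proof (intro allI impI ballI)
      fix m y z assume y: "y \<in> A m" and z: "z \<in> A n"
      obtain j where j: "c j = z" "g j = h z" using hz[OF z] by blast
      obtain i where i: "c i = y" "g i = h y" using hz[OF y] by blast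
      have "dist y z = dist (h y) (h z)" using dcc[of i j] i j by simp
      moreover have "\<bar>dist (h y) (h z) - dist (\<phi> m y) (\<phi> n z)\<bar> \<le> dist (h y) (\<phi> m y) + dist (h z) (\<phi> n z)"
        by (rule abs_dist_diff2)
      ultimately show "\<bar>dist y z - dist (\<phi> m y) (\<phi> n z)\<bar> < 1 / 2^m + 1 / 2^n"
        using phi[OF y] phi[OF z] by simp
    qed
    have "M \<subseteq> (\<Union>z\<in>A n. ball (\<phi> n z) (2 / 2^n))"
    proof
      fix x assume x: "x \<in> M"
      have "A n \<subseteq> range c" using rc U_def by blast
      then obtain N where N: "A n \<subseteq> c ` {..<N}" using finite_range_prefix assms(6) by blast
      have "bf_sim M (Suc 0) (as @ map c [0..<N]) (bs @ map g [0..<N])" using Eiso unfolding E_def by blast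
      then obtain x' where x': "x' \<in> M" "bf_sim M 0 ((as @ map c [0..<N]) @ [x']) ((bs @ map g [0..<N]) @ [x])"
        using x bf_sim.simps(2)[of M 0] by blast
      then have pi: "partial_iso ((as @ map c [0..<N]) @ [x']) ((bs @ map g [0..<N]) @ [x])"
        using bf_sim.simps(1) by blast
      have "x' \<in> (\<Union>w\<in>A n. ball w (1 / 2^n))" using assms(9)[of n] x'(1) by blast
      then obtain z where z: "z \<in> A n" "dist z x' < 1/2^n" by auto
      obtain j where j: "j < N" "c j = z" using N z(1) by blast
      have gj: "g j = h z" using hc j(2) by blast
      let ?xs = "(as @ map c [0..<N]) @ [x']" and ?ys = "(bs @ map g [0..<N]) @ [x]"
      have "dist (?xs ! (p+j)) (?xs ! (p+N)) = dist (?ys ! (p+j)) (?ys ! (p+N))"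
        using pi assms(2) j(1) unfolding partial_iso_iff by auto
      then have "dist (c j) x' = dist (g j) x" using assms(2,3) j(1) by (simp add: nth_append del: upt_Suc)
      then have d1: "dist (h z) x < 1/2^n" using z(2) j(2) gj by simp
      have d2: "dist (\<phi> n z) (h z) < 1/2^n" using phi[OF z(1)] by (simp add: dist_commute)
      have "dist (\<phi> n z) x \<le> dist (\<phi> n z) (h z) + dist (h z) x" by (rule dist_triangle)
      then have "dist (\<phi> n z) x < 2 / 2^n" using d1 d2 by simp
      then show "x \<in> (\<Union>z\<in>A n. ball (\<phi> n z) (2 / 2^n))" using z(1) by auto
    qed
    then show "M \<inter> (\<Union>z\<in>A n. ball (\<phi> n z) (2 / 2^n)) = M" by blast
  qed
qed

end
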